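(* Let $W$ be a real $N\times N$ matrix, $M$ a real $n\times N$ matrix with Moore–Penrose pseudoinverse $M^+$ (an $N\times n$ matrix), and for each $i\in\{1,\ldots,N\}$ let $h_i:\mathbb{R}\times\mathbb{R}\to\mathbb{R}$ be analytic. Consider the complete dynamics $\dot x_i=h_i(x_i,y_i)$ with $y_i=\sum_{j=1}^NW_{ij}x_j$, and the least-square reduced dynamics \[\dot X_\mu=\sum_{i=1}^NM_{\mu i}\,h_i(\tilde x_i,\tilde y_i),\qquad \mu\in\{1,\ldots,n\},\] where $\tilde x=M^+X$ and $\tilde y=WM^+X$. Then the reduced dynamics can be expressed in terms of higher-order interactions between the observables as \[\dot X_\mu=\mathcal{C}_\mu+\sum_{d_x=1}^\infty\sum_{\bm\alpha}\mathcal{D}^{(d_x+1)}_{\mu\bm\alpha}X_{\bm\alpha}+\sum_{d_y=1}^\infty\sum_{\bm\beta}\mathcal{W}^{(d_y+1)}_{\mu\bm\beta}X_{\bm\beta}+\sum_{d_x,d_y=1}^\infty\sum_{\bm\alpha,\bm\beta}\mathcal{T}^{(d_x+d_y+1)}_{\mu\bm\alpha\bm\beta}X_{\bm\alpha}X_{\bm\beta},\] where the sums run over multi-indices $\bm\alpha=(\alpha_1,\ldots,\alpha_{d_x})\in\{1,\ldots,n\}^{d_x}$ and $\bm\beta=(\beta_1,\ldots,\beta_{d_y})\in\{1,\ldots,n\}^{d_y}$, $X_{\bm\gamma}=X_{\gamma_1}\cdots X_{\gamma_d}$, $\mathcal{C}_\mu$ is a real constant, and \begin{align*} \mathcal{D}^{(d_x+1)}_{\mu\bm\alpha}&=\sum_{i=1}^Nc_{id_x0}M_{\mu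 i}M^+_{i\alpha_1}\cdots M^+_{i\alpha_{d_x}},\\ \mathcal{W}^{(d_y+1)}_{\mu\bm\beta}&=\sum_{i,j_1,\ldots,j_{d_y}=1}^Nc_{i0d_y}M_{\mu i}W_{ij_1}\cdots W_{ij_{d_y}}M^+_{j_1\beta_1}\cdots M^+_{j_{d_y}\beta_{d_y}},\\ \mathcal{T}^{(d_x+d_y+1)}_{\mu\bm\alpha\bm\beta}&=\sum_{i,j_1,\ldots,j_{d_y}=1}^Nc_{id_xd_y}M_{\mu i}M^+_{i\alpha_1}\cdots M^+_{i\alpha_{d_x}}W_{ij_1}\cdots W_{ij_{d_y}}M^+_{j_1\beta_1}\cdots M^+_{j_{d_y}\beta_{d_y}}, \end{align*} for some real coefficients $c_{id_xd_y}$, $i\in\{1,\ldots,N\}$, $d_x,d_y\in\mathbb{Z}_{\ge0}$. *)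

theory Defs
  imports "HOL-Analysis.Analysis"
begin

text \<open>Moore-Penrose pseudoinverse via the four Penrose conditions (it is unique).\<close>
definition moore_penrose_inverse :: "real^'c^'r \<Rightarrow> real^'r^'c \<Rightarrow> bool" where
  "moore_penrose_inverse A P \<longleftrightarrow>
     A ** P ** A = A \<and> P ** A ** P = P \<and>
     transpose (A ** P) = A ** P \<and> transpose (P ** A) = P ** A"

definition real_analytic2 :: "(real \<Rightarrow> real \<Rightarrow> real) \<Rightarrow> bool" where
  "real_analytic2 f \<longleftrightarrow>
     (\<forall>a b. \<exists>r>0. \<exists>co :: nat \<Rightarrow> nat \<Rightarrow> real. \<forall>x y. \<bar>x - a\<bar> < r \<and> \<bar>y - b\<bar> < r \<longrightarrow>
        ((\<lambda>(k, l). co k l * (x - a) ^ k * (y - b) ^ l) has_sum f x y) UNIV)"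

definition mlists :: "nat \<Rightarrow> 'a list set" where
  "mlists d = {as. length as = d}"

definition Xmono :: "real^'n \<Rightarrow> 'n list \<Rightarrow> real" where
  "Xmono X as = (\<Prod>k<length as. X $ (as ! k))"

definition coefD :: "('N \<Rightarrow> nat \<Rightarrow> nat \<Rightarrow> real) \<Rightarrow> real^'N^'n \<Rightarrow> real^'n^'N \<Rightarrow> 'n \<Rightarrow> 'n list \<Rightarrow> real" where
  "coefD c M Mp \<mu> as =
     (\<Sum>i\<in>UNIV. c i (length as) 0 * M $ \<mu> $ i * (\<Prod>k<length as. Mp $ i $ (as ! k)))"

definition coefW :: "('N \<Rightarrow> nat \<Rightarrow> nat \<Rightarrow> real) \<Rightarrow> real^'N^'n \<Rightarrow> real^'N^'N \<Rightarrow> real^'n^'N \<Rightarrow> 'n \<Rightarrow> 'n list \<Rightarrow> real" where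
  "coefW c M W Mp \<mu> bs =
     (\<Sum>i\<in>UNIV. \<Sum>js\<in>mlists (length bs).
        c i 0 (length bs) * M $ \<mu> $ i * (\<Prod>k<length bs. W $ i $ (js ! k))
          * (\<Prod>k<length bs. Mp $ (js ! k) $ (bs ! k)))"

definition coefT :: "('N \<Rightarrow> nat \<Rightarrow> nat \<Rightarrow> real) \<Rightarrow> real^'N^'n \<Rightarrow> real^'N^'N \<Rightarrow> real^'n^'N \<Rightarrow> 'n \<Rightarrow> 'n list \<Rightarrow> 'n list \<Rightarrow> real" where
  "coefT c M W Mp \<mu> as bs =
     (\<Sum>i\<in>UNIV. \<Sum>js\<in>mlists (length bs).
        c i (length as) (length bs) * M $ \<mu> $ i * (\<Prod>k<length as. Mp $ i $ (as ! k))
          * (\<Prod>k<length bs. W $ i $ (js ! k))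
          * (\<Prod>k<length bs. Mp $ (js ! k) $ (bs ! k)))"

end

theory Submission imports Defs begin

lemma finite_mlists: "finite (mlists d :: ('a::finite) list set)"
  unfolding mlists_def using finite_lists_length_eq[of "UNIV::'a set" d] by simp

lemma mlists_Suc: "mlists (Suc d) = (\<lambda>(a,as). a # as) ` (UNIV \<times> mlists d)"
  unfolding mlists_def by (auto simp: length_Suc_conv)

lemma mlists_prod_sum:
  fixes f :: "nat \<Rightarrow> 'a::finite \<Rightarrow> real"
  shows "(\<Sum>as\<in>mlists d. \<Prod>k<d. f k (as!k)) = (\<Prod>k<d. \<Sum>a\<in>UNIV. f k a)"
proof (induction d arbitrary: f)
  case 0
  have "mlists 0 = {[]::'a list}" unfolding mlists_def by auto
  then show ?case by simp
next
  case (Suc d)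
  have inj: "inj_on (\<lambda>(a,as). a # as) (UNIV \<times> mlists d)" by (auto simp: inj_on_def)
  have "(\<Sum>as\<in>mlists (Suc d). \<Prod>k<Suc d. f k (as!k))
     = (\<Sum>p\<in>UNIV \<times> mlists d. \<Prod>k<Suc d. f k ((fst p # snd p)!k))"
    unfolding mlists_Suc by (subst sum.reindex[OF inj]) (auto simp: case_prod_beta)
  also have "\<dots> = (\<Sum>p\<in>UNIV \<times> mlists d. f 0 (fst p) * (\<Prod>k<d. f (Suc k) (snd p ! k)))"
    by (simp add: prod.lessThan_Suc_shift del: prod.lessThan_Suc)
  also have "\<dots> = (\<Sum>a\<in>UNIV. \<Sum>as\<in>mlists d. f 0 a * (\<Prod>k<d. f (Suc k) (as ! k)))"
    by (simp add: sum.cartesian_product case_prod_beta)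
  also have "\<dots> = (\<Sum>a\<in>UNIV. f 0 a) * (\<Prod>k<d. \<Sum>a\<in>UNIV. f (Suc k) a)"
    by (simp add: sum_distrib_left[symmetric] sum_distrib_right Suc.IH[of "\<lambda>k. f (Suc k)"])
  also have "\<dots> = (\<Prod>k<Suc d. \<Sum>a\<in>UNIV. f k a)"
    by (simp add: prod.lessThan_Suc_shift del: prod.lessThan_Suc)
  finally show ?case .
qed

lemma mlists_pow_sum:
  fixes g :: "'a::finite \<Rightarrow> real"
  shows "(\<Sum>as\<in>mlists d. \<Prod>k<d. g (as!k)) = (\<Sum>a\<in>UNIV. g a) ^ d"
  using mlists_prod_sum[where d=d and f="\<lambda>k. g"] by simp

lemma P1:
  fixes Mp :: "real^'n^'N" and X :: "real^'n"
  shows "(\<Sum>as\<in>mlists d. (\<Prod>k<length as. Mp$i$(as!k)) * Xmono X as) = ((Mp *v X)$i)^d"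
proof -
  have "(\<Sum>as\<in>mlists d. (\<Prod>k<length as. Mp$i$(as!k)) * Xmono X as)
      = (\<Sum>as\<in>mlists d. \<Prod>k<d. Mp$i$(as!k) * X$(as!k))"
    by (rule sum.cong) (auto simp: mlists_def Xmono_def prod.distrib)
  also have "\<dots> = ((Mp *v X)$i)^d"
    by (subst mlists_pow_sum) (simp add: matrix_vector_mult_def)
  finally show ?thesis .
qed

lemma P2:
  fixes Mp :: "real^'n^'N" and X :: "real^'n" and W :: "real^'N^'N"
  shows "(\<Sum>js\<in>mlists d. \<Sum>bs\<in>mlists d. (\<Prod>k<d. W$i$(js!k)) * (\<Prod>k<d. Mp$(js!k)$(bs!k)) * Xmono X bs)
     = ((W *v (Mp *v X))$i)^d"
proof -
  have "(\<Sum>js\<in>mlists d. \<Sum>bs\<in>mlists d. (\<Prod>k<d. W$i$(js!k)) * (\<Prod>k<d. Mp$(js!k)$(bs!k)) * Xmono X bs)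
     = (\<Sum>js\<in>mlists d. (\<Prod>k<d. W$i$(js!k)) * (\<Sum>bs\<in>mlists d. \<Prod>k<d. Mp$(js!k)$(bs!k) * X$(bs!k)))"
    by (rule sum.cong[OF refl], subst sum_distrib_left, rule sum.cong)
       (auto simp: mlists_def Xmono_def prod.distrib)
  also have "\<dots> = (\<Sum>js\<in>mlists d. (\<Prod>k<d. W$i$(js!k)) * (\<Prod>k<d. (Mp *v X)$(js!k)))"
    by (subst mlists_prod_sum) (simp add: matrix_vector_mult_def)
  also have "\<dots> = (\<Sum>js\<in>mlists d. \<Prod>k<d. W$i$(js!k) * (Mp *v X)$(js!k))"
    by (simp add: prod.distrib)
  also have "\<dots> = ((W *v (Mp *v X))$i)^d"
    by (subst mlists_pow_sum) (simp add: matrix_vector_mult_def)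
  finally show ?thesis .
qed

lemma has_sum_finsum:
  fixes f :: "'i \<Rightarrow> 'a \<Rightarrow> real"
  assumes "finite I" "\<And>i. i \<in> I \<Longrightarrow> (f i has_sum s i) A"
  shows "((\<lambda>x. \<Sum>i\<in>I. f i x) has_sum (\<Sum>i\<in>I. s i)) A"
  using assms
proof (induction I rule: finite_induct)
  case empty then show ?case by (simp add: has_sum_0)
next
  case (insert j I)
  then show ?case by (simp add: has_sum_add)
qed

lemma D_eq:
  fixes M :: "real^'N^'n" and Mp :: "real^'n^'N" and X :: "real^'n"
  shows "(\<Sum>as\<in>mlists d. coefD c M Mp \<mu> as * Xmono X as)
    = (\<Sum>i\<in>UNIV. M$\<mu>$i * (c i d 0 * ((Mp *v X)$i)^d))"
proof -
  have "(\<Sum>as\<in>mlists d. coefD c M Mp \<mu> as * Xmono X as)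
     = (\<Sum>as\<in>mlists d. \<Sum>i\<in>UNIV. M$\<mu>$i * c i d 0 * ((\<Prod>k<length as. Mp$i$(as!k)) * Xmono X as))"
    apply (rule sum.cong[OF refl])
    apply (simp add: coefD_def sum_distrib_right)
    apply (rule sum.cong[OF refl])
    apply (auto simp: mlists_def mult_ac)
    done
  also have "\<dots> = (\<Sum>i\<in>UNIV. M$\<mu>$i * c i d 0 * (\<Sum>as\<in>mlists d. (\<Prod>k<length as. Mp$i$(as!k)) * Xmono X as))"
    by (subst sum.swap) (simp add: sum_distrib_left)
  also have "\<dots> = (\<Sum>i\<in>UNIV. M$\<mu>$i * (c i d 0 * ((Mp *v X)$i)^d))"
    by (simp only: P1) (simp add: mult_ac)
  finally show ?thesis .
qed

lemma W_eq:
  fixes M :: "real^'N^'n" and Mp :: "real^'n^'N" and X :: "real^'n" and W :: "real^'N^'N"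
  shows "(\<Sum>bs\<in>mlists d. coefW c M W Mp \<mu> bs * Xmono X bs)
    = (\<Sum>i\<in>UNIV. M$\<mu>$i * (c i 0 d * ((W *v (Mp *v X))$i)^d))"
proof -
  have "(\<Sum>bs\<in>mlists d. coefW c M W Mp \<mu> bs * Xmono X bs)
     = (\<Sum>bs\<in>mlists d. \<Sum>i\<in>UNIV. M$\<mu>$i * c i 0 d * (\<Sum>js\<in>mlists d.
         (\<Prod>k<d. W$i$(js!k)) * (\<Prod>k<d. Mp$(js!k)$(bs!k)) * Xmono X bs))"
    apply (rule sum.cong[OF refl])
    apply (simp add: coefW_def sum_distrib_right sum_distrib_left)
    apply (rule sum.cong[OF refl])+
    apply (auto simp: mlists_def mult_ac)
    done
  also have "\<dots> = (\<Sum>i\<in>UNIV. M$\<mu>$i * c i 0 d * (\<Sum>js\<in>mlists d. \<Sum>bs\<in>mlists d.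
         (\<Prod>k<d. W$i$(js!k)) * (\<Prod>k<d. Mp$(js!k)$(bs!k)) * Xmono X bs))"
    apply (subst sum.swap) apply (simp add: sum_distrib_left)
    apply (rule sum.cong[OF refl]) apply (subst sum.swap) ..
  also have "\<dots> = (\<Sum>i\<in>UNIV. M$\<mu>$i * (c i 0 d * ((W *v (Mp *v X))$i)^d))"
    by (simp only: P2) (simp add: mult_ac)
  finally show ?thesis .
qed

lemma swap3:
  fixes K :: "'i \<Rightarrow> real"
  shows "(\<Sum>a\<in>A. \<Sum>b\<in>B. \<Sum>i\<in>I. K i * F i a * G i b) = (\<Sum>i\<in>I. K i * (\<Sum>a\<in>A. F i a) * (\<Sum>b\<in>B. G i b))"
proof -
  have "(\<Sum>a\<in>A. \<Sum>b\<in>B. \<Sum>i\<in>I. K i * F i a * G i b) = (\<Sum>a\<in>A. \<Sum>i\<in>I. \<Sum>b\<in>B. K i * F i a * G i b)"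
    by (rule sum.cong[OF refl]) (rule sum.swap)
  also have "\<dots> = (\<Sum>i\<in>I. \<Sum>a\<in>A. \<Sum>b\<in>B. K i * F i a * G i b)"
    by (rule sum.swap)
  also have "\<dots> = (\<Sum>i\<in>I. K i * (\<Sum>a\<in>A. F i a) * (\<Sum>b\<in>B. G i b))"
    by (rule sum.cong[OF refl]) (simp add: sum_distrib_left sum_distrib_right mult.assoc sum.swap[of _ B A])
  finally show ?thesis .
qed

lemma T_eq:
  fixes M :: "real^'N^'n" and Mp :: "real^'n^'N" and X :: "real^'n" and W :: "real^'N^'N"
  shows "(\<Sum>as\<in>mlists dx. \<Sum>bs\<in>mlists dy. coefT c M W Mp \<mu> as bs * Xmono X as * Xmono X bs)
    = (\<Sum>i\<in>UNIV. M$\<mu>$i * (c i dx dy * ((Mp *v X)$i)^dx * ((W *v (Mp *v X))$i)^dy))"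
proof -
  have "(\<Sum>as\<in>mlists dx. \<Sum>bs\<in>mlists dy. coefT c M W Mp \<mu> as bs * Xmono X as * Xmono X bs)
     = (\<Sum>as\<in>mlists dx. \<Sum>bs\<in>mlists dy. \<Sum>i\<in>UNIV. (M$\<mu>$i * c i dx dy) *
         ((\<Prod>k<length as. Mp$i$(as!k)) * Xmono X as) * (\<Sum>js\<in>mlists dy.
         (\<Prod>k<dy. W$i$(js!k)) * (\<Prod>k<dy. Mp$(js!k)$(bs!k)) * Xmono X bs))"
    apply (rule sum.cong[OF refl])+
    apply (simp add: coefT_def sum_distrib_right sum_distrib_left)
    apply (rule sum.cong[OF refl])+
    apply (auto simp: mlists_def mult_ac)
    done
  also have "\<dots> = (\<Sum>i\<in>UNIV. (M$\<mu>$i * c i dx dy) *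
         (\<Sum>as\<in>mlists dx. (\<Prod>k<length as. Mp$i$(as!k)) * Xmono X as) * (\<Sum>bs\<in>mlists dy. \<Sum>js\<in>mlists dy.
         (\<Prod>k<dy. W$i$(js!k)) * (\<Prod>k<dy. Mp$(js!k)$(bs!k)) * Xmono X bs))"
    by (rule swap3)
  also have "\<dots> = (\<Sum>i\<in>UNIV. (M$\<mu>$i * c i dx dy) *
         (\<Sum>as\<in>mlists dx. (\<Prod>k<length as. Mp$i$(as!k)) * Xmono X as) * (\<Sum>js\<in>mlists dy. \<Sum>bs\<in>mlists dy.
         (\<Prod>k<dy. W$i$(js!k)) * (\<Prod>k<dy. Mp$(js!k)$(bs!k)) * Xmono X bs))"
    by (subst sum.swap[of _ "mlists dy" "mlists dy"]) (rule refl)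
  also have "\<dots> = (\<Sum>i\<in>UNIV. M$\<mu>$i * (c i dx dy * ((Mp *v X)$i)^dx * ((W *v (Mp *v X))$i)^dy))"
    by (simp only: P1 P2) (simp add: mult_ac)
  finally show ?thesis .
qed

theorem propositionS48:
  fixes W :: "real^'N^'N" and M :: "real^'N^'n" and Mp :: "real^'n^'N"
    and h :: "'N \<Rightarrow> real \<Rightarrow> real \<Rightarrow> real"
  assumes "moore_penrose_inverse M Mp"
    and "\<forall>i. real_analytic2 (h i)"
  shows "\<exists>(c :: 'N \<Rightarrow> nat \<Rightarrow> nat \<Rightarrow> real) (C :: 'n \<Rightarrow> real) (U :: (real^'n) set).
           open U \<and> 0 \<in> U \<and>
           (\<forall>X\<in>U. \<forall>\<mu>. \<exists>S1 S2 S3.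
              ((\<lambda>dx. \<Sum>as\<in>mlists dx. coefD c M Mp \<mu> as * Xmono X as) has_sum S1) {1..} \<and>
              ((\<lambda>dy. \<Sum>bs\<in>mlists dy. coefW c M W Mp \<mu> bs * Xmono X bs) has_sum S2) {1..} \<and>
              ((\<lambda>(dx, dy). \<Sum>as\<in>mlists dx. \<Sum>bs\<in>mlists dy.
                   coefT c M W Mp \<mu> as bs * Xmono X as * Xmono X bs) has_sum S3) ({1..} \<times> {1..}) \<and>
              (\<Sum>i\<in>UNIV. M $ \<mu> $ i * h i ((Mp *v X) $ i) ((W *v (Mp *v X)) $ i))
                = C \<mu> + S1 + S2 + S3)"
proof -
  have H: "\<forall>i. \<exists>r>0. \<exists>co :: nat \<Rightarrow> nat \<Rightarrow> real. \<forall>x y. \<bar>x\<bar> < r \<and> \<bar>y\<bar> < r \<longrightarrow>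
        ((\<lambda>(k, l). co k l * x ^ k * y ^ l) has_sum h i x y) UNIV"
  proof
    fix i
    have "\<exists>r>0. \<exists>co :: nat \<Rightarrow> nat \<Rightarrow> real. \<forall>x y. \<bar>x - 0\<bar> < r \<and> \<bar>y - 0\<bar> < r \<longrightarrow>
        ((\<lambda>(k, l). co k l * (x - 0) ^ k * (y - 0) ^ l) has_sum h i x y) UNIV"
      using assms(2) unfolding real_analytic2_def by blast
    then show "\<exists>r>0. \<exists>co :: nat \<Rightarrow> nat \<Rightarrow> real. \<forall>x y. \<bar>x\<bar> < r \<and> \<bar>y\<bar> < r \<longrightarrow>
        ((\<lambda>(k, l). co k l * x ^ k * y ^ l) has_sum h i x y) UNIV" by simp
  qed
  from choice[OF H] obtain r where r0: "\<forall>i. r i > 0 \<and> (\<exists>co :: nat \<Rightarrow> nat \<Rightarrow> real. \<forall>x y. \<bar>x\<bar> < r i \<and> \<bar>y\<bar> < r i \<longrightarrow>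
        ((\<lambda>(k, l). co k l * x ^ k * y ^ l) has_sum h i x y) UNIV)" by blast
  then have "\<forall>i. \<exists>co :: nat \<Rightarrow> nat \<Rightarrow> real. \<forall>x y. \<bar>x\<bar> < r i \<and> \<bar>y\<bar> < r i \<longrightarrow>
        ((\<lambda>(k, l). co k l * x ^ k * y ^ l) has_sum h i x y) UNIV" by blast
  from choice[OF this] obtain co where co0: "\<forall>i. \<forall>x y. \<bar>x\<bar> < r i \<and> \<bar>y\<bar> < r i \<longrightarrow>
        ((\<lambda>(k, l). co i k l * x ^ k * y ^ l) has_sum h i x y) UNIV" by blast
  have r: "\<And>i. r i > 0" using r0 by blast
  have co: "\<And>i x y. \<bar>x\<bar> < r i \<Longrightarrow> \<bar>y\<bar> < r i \<Longrightarrow>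
        ((\<lambda>(k, l). co i k l * x ^ k * y ^ l) has_sum h i x y) UNIV" using co0 by blast
  define U where "U = (\<Inter>i. {X::real^'n. \<bar>(Mp *v X)$i\<bar> < r i} \<inter> {X. \<bar>(W *v (Mp *v X))$i\<bar> < r i})"
  have "open U"
  proof -
    have "open {X::real^'n. \<bar>(A *v X)$i\<bar> < s}" for A :: "real^'n^'N" and i s
      by (intro open_Collect_less continuous_intros)
    then show ?thesis unfolding U_def
      by (intro open_INT) (simp_all add: matrix_vector_mul_assoc open_Int)
  qed
  moreover have "0 \<in> U" using r by (simp add: U_def)
  moreover have "\<forall>X\<in>U. \<forall>\<mu>. \<exists>S1 S2 S3.
              ((\<lambda>dx. \<Sum>as\<in>mlists dx. coefD co M Mp \<mu> as * Xmono X as) has_sum S1) {1..} \<and>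
              ((\<lambda>dy. \<Sum>bs\<in>mlists dy. coefW co M W Mp \<mu> bs * Xmono X bs) has_sum S2) {1..} \<and>
              ((\<lambda>(dx, dy). \<Sum>as\<in>mlists dx. \<Sum>bs\<in>mlists dy.
                   coefT co M W Mp \<mu> as bs * Xmono X as * Xmono X bs) has_sum S3) ({1..} \<times> {1..}) \<and>
              (\<Sum>i\<in>UNIV. M $ \<mu> $ i * h i ((Mp *v X) $ i) ((W *v (Mp *v X)) $ i))
                = (\<Sum>i\<in>UNIV. M$\<mu>$i * co i 0 0) + S1 + S2 + S3"
  proof (intro ballI allI)
    fix X \<mu> assume XU: "X \<in> U"
    define x where "x = Mp *v X"
    define y where "y = W *v (Mp *v X)"
    have xr: "\<bar>x$i\<bar> < r i" and yr: "\<bar>y$i\<bar> < r i" for i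
      using XU by (auto simp: U_def x_def y_def)
    define g where "g = (\<lambda>p. \<Sum>i\<in>UNIV. M$\<mu>$i * ((\<lambda>(k, l). co i k l * (x$i) ^ k * (y$i) ^ l) p))"
    have hg: "(g has_sum (\<Sum>i\<in>UNIV. M $ \<mu> $ i * h i (x$i) (y$i))) UNIV"
      unfolding g_def
      by (intro has_sum_finsum has_sum_cmult_right co xr yr) simp_all
    then have gs: "g summable_on A" for A
      using summable_on_subset_banach[of g UNIV A] by (auto simp: summable_on_def)
    define S1 where "S1 = infsum g ((\<lambda>d. (d, 0::nat)) ` {1..})"
    define S2 where "S2 = infsum g ((\<lambda>d. (0::nat, d)) ` {1..})"
    define S3 where "S3 = infsum g ({1..} \<times> {1..})"
    have h1: "(g has_sum S1) ((\<lambda>d. (d, 0::nat)) ` {1..})" unfolding S1_def using gs by simp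
    have h2: "(g has_sum S2) ((\<lambda>d. (0::nat, d)) ` {1..})" unfolding S2_def using gs by simp
    have h3: "(g has_sum S3) ({1..} \<times> {1..})" unfolding S3_def using gs by simp
    have f1: "((\<lambda>dx. \<Sum>as\<in>mlists dx. coefD co M Mp \<mu> as * Xmono X as) has_sum S1) {1..}"
    proof -
      have "((g \<circ> (\<lambda>d. (d, 0::nat))) has_sum S1) {1..}"
        using h1 by (subst (asm) has_sum_reindex) (auto simp: inj_on_def)
      then show ?thesis
        by (rule has_sum_cong[THEN iffD1, rotated]) (simp add: D_eq g_def x_def)
    qed
    moreover have f2: "((\<lambda>dy. \<Sum>bs\<in>mlists dy. coefW co M W Mp \<mu> bs * Xmono X bs) has_sum S2) {1..}"
    proof -
      have "((g \<circ> (\<lambda>d. (0::nat, d))) has_sum S2) {1..}"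
        using h2 by (subst (asm) has_sum_reindex) (auto simp: inj_on_def)
      then show ?thesis
        by (rule has_sum_cong[THEN iffD1, rotated]) (simp add: W_eq g_def y_def)
    qed
    moreover have f3: "((\<lambda>(dx, dy). \<Sum>as\<in>mlists dx. \<Sum>bs\<in>mlists dy.
                   coefT co M W Mp \<mu> as bs * Xmono X as * Xmono X bs) has_sum S3) ({1..} \<times> {1..})"
      using h3 by (rule has_sum_cong[THEN iffD1, rotated]) (auto simp: T_eq g_def x_def y_def)
    moreover have f4: "(\<Sum>i\<in>UNIV. M $ \<mu> $ i * h i (x $ i) (y $ i))
                = (\<Sum>i\<in>UNIV. M$\<mu>$i * co i 0 0) + S1 + S2 + S3"
    proof -
      have h0: "(g has_sum (\<Sum>i\<in>UNIV. M$\<mu>$i * co i 0 0)) {(0,0)}"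
        by (rule has_sum_finiteI) (simp_all add: g_def)
      have "(g has_sum ((\<Sum>i\<in>UNIV. M$\<mu>$i * co i 0 0) + S1 + S2 + S3))
          ({(0,0)} \<union> (\<lambda>d. (d, 0::nat)) ` {1..} \<union> (\<lambda>d. (0::nat, d)) ` {1..} \<union> {1..} \<times> {1..})"
        by (intro has_sum_Un_disjoint h0 h1 h2 h3) auto
      moreover have "{(0,0)} \<union> (\<lambda>d. (d, 0::nat)) ` {1..} \<union> (\<lambda>d. (0::nat, d)) ` {1..} \<union> {1..} \<times> {1..} = UNIV"
      proof -
        have "(a, b) \<in> {(0,0)} \<union> (\<lambda>d. (d, 0::nat)) ` {1..} \<union> (\<lambda>d. (0::nat, d)) ` {1..} \<union> {1..} \<times> {1..}"
          for a b :: nat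
          by (cases "a = 0"; cases "b = 0") (auto simp: image_iff)
        then show ?thesis by auto
      qed
      ultimately have "(g has_sum ((\<Sum>i\<in>UNIV. M$\<mu>$i * co i 0 0) + S1 + S2 + S3)) UNIV" by simp
      then show ?thesis using has_sum_unique[OF hg] by blast
    qed
    ultimately show "\<exists>S1 S2 S3.
              ((\<lambda>dx. \<Sum>as\<in>mlists dx. coefD co M Mp \<mu> as * Xmono X as) has_sum S1) {1..} \<and>
              ((\<lambda>dy. \<Sum>bs\<in>mlists dy. coefW co M W Mp \<mu> bs * Xmono X bs) has_sum S2) {1..} \<and>
              ((\<lambda>(dx, dy). \<Sum>as\<in>mlists dx. \<Sum>bs\<in>mlists dy.
                   coefT co M W Mp \<mu> as bs * Xmono X as * Xmono X bs) has_sum S3) ({1..} \<times> {1..}) \<and>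
              (\<Sum>i\<in>UNIV. M $ \<mu> $ i * h i ((Mp *v X) $ i) ((W *v (Mp *v X)) $ i))
                = (\<Sum>i\<in>UNIV. M$\<mu>$i * co i 0 0) + S1 + S2 + S3"
      using f1 f2 f3 f4 unfolding x_def y_def by (intro exI[of _ S1] exI[of _ S2] exI[of _ S3] conjI)
  qed
  ultimately show ?thesis
    by (intro exI[of _ co] exI[of _ "\<lambda>\<mu>. \<Sum>i\<in>UNIV. M$\<mu>$i * co i 0 0"] exI[of _ U] conjI)
qed

end
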